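(* Consider an instance of Bin Packing with Usage Cost: items whose distinct sizes are the positive integers $w'_1,\dots,w'_{n'}$, with $q_d\ge 1$ items of size $w'_d$, and $m$ bins, bin $j$ having positive integer capacity $C_j$, fixed cost $f_j\ge 0$ and unit cost $c_j\ge0$; let $C_{\max}=\max_j C_j$. Let $z_2^*$ be the optimal value of the linear relaxation of the cutting-stock formulation and $z_3^*$ the optimal value of the linear relaxation of the arc-flow formulation, both defined below, and assume the former is feasible. Then $z_3^*\le z_2^*$. Cutting-stock relaxation: for each bin $j$, a pattern is an integer vector $g=(g_1,\dots,g_{n'})$ with $0\le g_d\le q_d$ and $\sum_d g_dw'_d\le C_j$; $I_j$ is the set of all patterns for bin $j$, and the $i$-th pattern of bin $j$ is $(g_{1ij},\dots,g_{n'ij})$, with cost $co_{ij}=f_j+c_j\sum_d g_{dij}w'_d$ if the pattern is nonzero and $co_{ij}=0$ if it is the zero vector. $z_2^*=\min\sum_{j=1}^m\sum_{i\in I_j}co_{ij}p_{ij}$ subject to $\sum_{j=1}^m\sum_{i\in I_j}g_{dij}p_{ij}=q_d$ for all $d$, $\sum_{i\in I_j}p_{ij}=1$ for all $j$, and $p_{ij}\ge 0$. Arc-flow relaxation: let $I$ be the set of arcs $(a,a+w'_d)$ with $a\ge 0$ integer, $d\in\{1,\dots,n'\}$ and $a+w'_d\le C_{\max}$, with a variable $x_{ab}\ge 0$ for each arc $(a,b)\in I$, and a variable $y_{aj}\in[0,1]$ for each bin $j$ and $a\in\{0,\dots,C_{\max}\}$ (representing an arc from node $a$ to a sink, for bin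 $j$), with cost $co_{aj}=f_j+a\,c_j$ for $a>0$ and $co_{0j}=0$. $z_3^*=\min\sum_{j=1}^m\sum_{a=0}^{C_{\max}}co_{aj}y_{aj}$ subject to: for every $b\in\{1,\dots,C_{\max}\}$, $\sum_{(a,b)\in I}x_{ab}-\sum_{(b,c)\in I}x_{bc}-\sum_{j=1}^m y_{bj}=0$; $-\sum_{(0,c)\in I}x_{0c}-\sum_{j=1}^m y_{0j}=-m$; $\sum_{a=0}^{C_j}y_{aj}=1$ for every $j$; $\sum_{(a,a+w'_d)\in I}x_{a,a+w'_d}=q_d$ for every $d$; and $y_{aj}=0$ for every $j$ and $a\in\{C_j+1,\dots,C_{\max}\}$.
   Context: Bin Packing with Usage Cost: each item must be assigned to exactly one bin, the total size $l_j$ of the items in bin $j$ may not exceed $C_j$, a bin is used if it contains at least one item, a used bin $j$ costs $f_j+c_jl_j$, and the total cost is to be minimised. Both formulations above are linear relaxations of exact integer formulations of this problem (with $p_{ij}\in\{0,1\}$, $x_{ab}\in\mathbb{N}$, $y_{aj}\in\{0,1\}$ respectively). *)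

theory Defs
  imports Complex_Main
begin

text \<open>Instance data: item types d < n' with sizes w d and multiplicities q d;
  bins j < m with capacity C j, fixed cost f j, unit cost c j.\<close>

definition patterns :: "nat \<Rightarrow> (nat \<Rightarrow> nat) \<Rightarrow> (nat \<Rightarrow> nat) \<Rightarrow> nat \<Rightarrow> (nat \<Rightarrow> nat) set" where
  "patterns n' w q Cj = {g. (\<forall>d<n'. g d \<le> q d) \<and> (\<forall>d\<ge>n'. g d = 0)
                             \<and> (\<Sum>d<n'. g d * w d) \<le> Cj}"

definition pattern_cost :: "nat \<Rightarrow> (nat \<Rightarrow> nat) \<Rightarrow> real \<Rightarrow> real \<Rightarrow> (nat \<Rightarrow> nat) \<Rightarrow> real" where
  "pattern_cost n' w fj cj g =
     (if g = (\<lambda>_. 0) then 0 else fj + cj * real (\<Sum>d<n'. g d * w d))"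

definition cs_feasible ::
  "nat \<Rightarrow> (nat \<Rightarrow> nat) \<Rightarrow> (nat \<Rightarrow> nat) \<Rightarrow> nat \<Rightarrow> (nat \<Rightarrow> nat)
   \<Rightarrow> (nat \<Rightarrow> (nat \<Rightarrow> nat) \<Rightarrow> real) \<Rightarrow> bool" where
  "cs_feasible n' w q m C p \<longleftrightarrow>
     (\<forall>d<n'. (\<Sum>j<m. \<Sum>g\<in>patterns n' w q (C j). real (g d) * p j g) = real (q d))
   \<and> (\<forall>j<m. (\<Sum>g\<in>patterns n' w q (C j). p j g) = 1)
   \<and> (\<forall>j<m. \<forall>g\<in>patterns n' w q (C j). p j g \<ge> 0)"

definition cs_objective ::
  "nat \<Rightarrow> (nat \<Rightarrow> nat) \<Rightarrow> (nat \<Rightarrow> nat) \<Rightarrow> nat \<Rightarrow> (nat \<Rightarrow> nat)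
   \<Rightarrow> (nat \<Rightarrow> real) \<Rightarrow> (nat \<Rightarrow> real) \<Rightarrow> (nat \<Rightarrow> (nat \<Rightarrow> nat) \<Rightarrow> real) \<Rightarrow> real" where
  "cs_objective n' w q m C f c p =
     (\<Sum>j<m. \<Sum>g\<in>patterns n' w q (C j). pattern_cost n' w (f j) (c j) g * p j g)"

definition z2 ::
  "nat \<Rightarrow> (nat \<Rightarrow> nat) \<Rightarrow> (nat \<Rightarrow> nat) \<Rightarrow> nat \<Rightarrow> (nat \<Rightarrow> nat)
   \<Rightarrow> (nat \<Rightarrow> real) \<Rightarrow> (nat \<Rightarrow> real) \<Rightarrow> real" where
  "z2 n' w q m C f c = Inf (cs_objective n' w q m C f c ` {p. cs_feasible n' w q m C p})"

text \<open>C_max = max_j C_j (the 0 only matters in the degenerate case m = 0).\<close>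
definition Cmax :: "nat \<Rightarrow> (nat \<Rightarrow> nat) \<Rightarrow> nat" where
  "Cmax m C = Max (insert 0 (C ` {..<m}))"

definition arcs :: "nat \<Rightarrow> (nat \<Rightarrow> nat) \<Rightarrow> nat \<Rightarrow> (nat \<times> nat) set" where
  "arcs n' w K = {(a, a + w d) | a d. d < n' \<and> a + w d \<le> K}"

definition af_cost :: "real \<Rightarrow> real \<Rightarrow> nat \<Rightarrow> real" where
  "af_cost fj cj a = (if a = 0 then 0 else fj + real a * cj)"

definition af_feasible ::
  "nat \<Rightarrow> (nat \<Rightarrow> nat) \<Rightarrow> (nat \<Rightarrow> nat) \<Rightarrow> nat \<Rightarrow> (nat \<Rightarrow> nat)
   \<Rightarrow> (nat \<times> nat \<Rightarrow> real) \<Rightarrow> (nat \<Rightarrow> nat \<Rightarrow> real) \<Rightarrow> bool" where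
  "af_feasible n' w q m C x y \<longleftrightarrow>
     (let K = Cmax m C; I = arcs n' w K in
        (\<forall>e\<in>I. x e \<ge> 0)
      \<and> (\<forall>j<m. \<forall>a\<le>K. 0 \<le> y a j \<and> y a j \<le> 1)
      \<and> (\<forall>b\<in>{1..K}. (\<Sum>e\<in>{e\<in>I. snd e = b}. x e) - (\<Sum>e\<in>{e\<in>I. fst e = b}. x e)
                        - (\<Sum>j<m. y b j) = 0)
      \<and> - (\<Sum>e\<in>{e\<in>I. fst e = 0}. x e) - (\<Sum>j<m. y 0 j) = - real m
      \<and> (\<forall>j<m. (\<Sum>a\<in>{0..C j}. y a j) = 1)
      \<and> (\<forall>d<n'. (\<Sum>e\<in>{e\<in>I. snd e = fst e + w d}. x e) = real (q d))
      \<and> (\<forall>j<m. \<forall>a\<in>{C j + 1..K}. y a j = 0))"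

definition af_objective ::
  "nat \<Rightarrow> (nat \<Rightarrow> nat) \<Rightarrow> (nat \<Rightarrow> real) \<Rightarrow> (nat \<Rightarrow> real) \<Rightarrow> (nat \<Rightarrow> nat \<Rightarrow> real) \<Rightarrow> real" where
  "af_objective m C f c y = (\<Sum>j<m. \<Sum>a\<in>{0..Cmax m C}. af_cost (f j) (c j) a * y a j)"

definition z3 ::
  "nat \<Rightarrow> (nat \<Rightarrow> nat) \<Rightarrow> (nat \<Rightarrow> nat) \<Rightarrow> nat \<Rightarrow> (nat \<Rightarrow> nat)
   \<Rightarrow> (nat \<Rightarrow> real) \<Rightarrow> (nat \<Rightarrow> real) \<Rightarrow> real" where
  "z3 n' w q m C f c =
     Inf ((\<lambda>(x, y). af_objective m C f c y) ` {(x, y). af_feasible n' w q m C x y})"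

end

theory Submission
  imports Defs
begin

definition Lg :: "nat \<Rightarrow> (nat \<Rightarrow> nat) \<Rightarrow> nat list" where
  "Lg N g = concat (map (\<lambda>d. replicate (g d) d) [0..<N])"
definition sp :: "nat \<Rightarrow> (nat \<Rightarrow> nat) \<Rightarrow> (nat \<Rightarrow> nat) \<Rightarrow> nat \<Rightarrow> nat" where
  "sp N w g i = sum_list (map w (take i (Lg N g)))"
definition Ag :: "nat \<Rightarrow> (nat \<Rightarrow> nat) \<Rightarrow> (nat \<Rightarrow> nat) \<Rightarrow> (nat \<times> nat) list" where
  "Ag N w g = map (\<lambda>i. (sp N w g i, sp N w g (Suc i))) [0..<length (Lg N g)]"

lemma Lg_count: "length (filter ((=) d) (Lg N g)) = (if d < N then g d else 0)"
  by (induction N) (auto simp: Lg_def filter_replicate less_Suc_eq)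

lemma Lg_sum: "sum_list (map w (Lg N g)) = (\<Sum>d<N. g d * w d)"
  by (induction N) (auto simp: Lg_def sum_list_replicate)

lemma Lg_set: "set (Lg N g) \<subseteq> {..<N}"
  by (induction N) (auto simp: Lg_def)

lemma flow_gen:
  fixes s :: "nat \<Rightarrow> nat"
  shows "real (length (filter (\<lambda>e. snd e = b) (map (\<lambda>i. (s i, s (Suc i))) [0..<k])))
       - real (length (filter (\<lambda>e. fst e = b) (map (\<lambda>i. (s i, s (Suc i))) [0..<k])))
       = (if s k = b then 1 else 0) - (if s 0 = b then 1 else 0)"
  by (induction k) auto

lemma sp_Suc: "i < length (Lg N g) \<Longrightarrow> sp N w g (Suc i) = sp N w g i + w (Lg N g ! i)"
  by (simp add: sp_def take_Suc_conv_app_nth)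

lemma sp_0: "sp N w g 0 = 0" by (simp add: sp_def)

lemma sp_len: "sp N w g (length (Lg N g)) = (\<Sum>d<N. g d * w d)"
  by (simp add: sp_def Lg_sum)

lemma sp_le: "sp N w g i \<le> (\<Sum>d<N. g d * w d)"
proof -
  have "sum_list (take i (map w (Lg N g))) \<le> sum_list (map w (Lg N g))"
    by (metis append_take_drop_id le_add1 sum_list_append)
  thus ?thesis by (simp add: sp_def take_map Lg_sum)
qed

lemma Ag_arcs:
  assumes "(\<Sum>d<N. g d * w d) \<le> K"
  shows "set (Ag N w g) \<subseteq> arcs N w K"
proof
  fix e assume "e \<in> set (Ag N w g)"
  then obtain i where i: "i < length (Lg N g)" and e: "e = (sp N w g i, sp N w g (Suc i))"
    by (auto simp: Ag_def)
  have d: "Lg N g ! i < N" using Lg_set i nth_mem by blast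
  have "sp N w g (Suc i) \<le> K" using sp_le[of N w g "Suc i"] assms by linarith
  thus "e \<in> arcs N w K" using d sp_Suc[OF i, of w] e unfolding arcs_def by auto
qed

lemma Ag_item:
  assumes inj: "inj_on w {..<N}" and d: "d < N"
  shows "length (filter (\<lambda>e. snd e = fst e + w d) (Ag N w g)) = g d"
proof -
  let ?L = "Lg N g"
  have "length (filter (\<lambda>e. snd e = fst e + w d) (Ag N w g))
      = length (filter (\<lambda>i. sp N w g (Suc i) = sp N w g i + w d) [0..<length ?L])"
    by (simp add: Ag_def filter_map o_def)
  also have "filter (\<lambda>i. sp N w g (Suc i) = sp N w g i + w d) [0..<length ?L]
      = filter (\<lambda>i. d = ?L ! i) [0..<length ?L]"
  proof (rule filter_cong)
    fix i assume "i \<in> set [0..<length ?L]"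
    hence i: "i < length ?L" by simp
    have Li: "?L ! i < N" using Lg_set i nth_mem by blast
    have "(w (?L ! i) = w d) = (?L ! i = d)"
      using inj Li d by (simp add: inj_on_eq_iff)
    thus "(sp N w g (Suc i) = sp N w g i + w d) = (d = ?L ! i)"
      by (simp only: sp_Suc[OF i]) linarith
  qed simp
  also have "length (filter (\<lambda>i. d = ?L ! i) [0..<length ?L]) = length (filter ((=) d) ?L)"
    by (subst (2) map_nth[symmetric]) (simp only: filter_map length_map o_def)
  finally show ?thesis using Lg_count d by simp
qed

lemma Ag_in0:
  assumes "\<forall>d<N. w d > 0"
  shows "length (filter (\<lambda>e. snd e = 0) (Ag N w g)) = 0"
proof -
  have "\<forall>e\<in>set (Ag N w g). snd e \<noteq> 0"
  proof
    fix e assume "e \<in> set (Ag N w g)"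
    then obtain i where i: "i < length (Lg N g)" and e: "e = (sp N w g i, sp N w g (Suc i))"
      by (auto simp: Ag_def)
    have "Lg N g ! i < N" using Lg_set i nth_mem by blast
    thus "snd e \<noteq> 0" using sp_Suc[OF i, of w] e assms by auto
  qed
  thus ?thesis by (simp add: filter_empty_conv)
qed

lemma sum_cnt:
  assumes "finite S" "set xs \<subseteq> S"
  shows "(\<Sum>e\<in>{e\<in>S. Q e}. real (length (filter ((=) e) xs))) = real (length (filter Q xs))"
  using assms(2)
proof (induction xs)
  case Nil thus ?case by simp
next
  case (Cons a xs)
  have "(\<Sum>e\<in>{e\<in>S. Q e}. real (length (filter ((=) e) (a # xs))))
      = (\<Sum>e\<in>{e\<in>S. Q e}. (if e = a then 1 else 0) + real (length (filter ((=) e) xs)))"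
    by (rule sum.cong) auto
  also have "\<dots> = (\<Sum>e\<in>{e\<in>S. Q e}. (if e = a then 1 else 0)) + real (length (filter Q xs))"
    using Cons by (simp add: sum.distrib)
  also have "(\<Sum>e\<in>{e\<in>S. Q e}. (if e = a then 1 else (0::real))) = (if Q a then 1 else 0)"
    using Cons.prems assms(1) by (simp add: sum.delta')
  finally show ?case by simp
qed


lemma flow_pat:
  "real (length (filter (\<lambda>e. snd e = b) (Ag N w g))) - real (length (filter (\<lambda>e. fst e = b) (Ag N w g)))
   = (if (\<Sum>d<N. g d * w d) = b then 1 else 0) - (if b = 0 then 1 else 0)"
proof -
  have e: "(if 0 = b then 1 else 0::real) = (if b = 0 then 1 else 0)" by auto
  show ?thesis unfolding Ag_def flow_gen sp_len sp_0 e ..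
qed

theorem proposition3:
  fixes n' m :: nat and w q C :: "nat \<Rightarrow> nat" and f c :: "nat \<Rightarrow> real"
  assumes "inj_on w {..<n'}"
    and "\<forall>d<n'. w d > 0"
    and "\<forall>d<n'. q d \<ge> 1"
    and "\<forall>j<m. C j > 0"
    and "\<forall>j<m. f j \<ge> 0"
    and "\<forall>j<m. c j \<ge> 0"
    and "\<exists>p. cs_feasible n' w q m C p"
  shows "z3 n' w q m C f c \<le> z2 n' w q m C f c"
  unfolding z3_def z2_def
proof (rule cInf_mono)
  show "cs_objective n' w q m C f c ` {p. cs_feasible n' w q m C p} \<noteq> {}"
    using assms(7) by auto
next
  show "bdd_below ((\<lambda>(x, y). af_objective m C f c y) ` {(x, y). af_feasible n' w q m C x y})"
  proof (rule bdd_belowI[where m=0])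
    fix v assume "v \<in> (\<lambda>(x, y). af_objective m C f c y) ` {(x, y). af_feasible n' w q m C x y}"
    then obtain x y where fe: "af_feasible n' w q m C x y" and v: "v = af_objective m C f c y" by auto
    have "\<forall>j<m. \<forall>a\<le>Cmax m C. 0 \<le> y a j" using fe unfolding af_feasible_def Let_def by auto
    thus "0 \<le> v" unfolding v af_objective_def
      using assms(5,6) by (auto intro!: sum_nonneg mult_nonneg_nonneg simp: af_cost_def)
  qed
next
  fix b assume "b \<in> cs_objective n' w q m C f c ` {p. cs_feasible n' w q m C p}"
  then obtain p where pf: "cs_feasible n' w q m C p" and b: "b = cs_objective n' w q m C f c p" by auto
  define K where "K = Cmax m C"
  define I where "I = arcs n' w K"
  define P where "P = (\<lambda>j. patterns n' w q (C j))"
  have Peq: "patterns n' w q (C j) = P j" for j by (simp add: P_def)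
  define sz where "sz = (\<lambda>g::nat\<Rightarrow>nat. \<Sum>d<n'. g d * w d)"
  have item: "\<forall>d<n'. (\<Sum>j<m. \<Sum>g\<in>P j. real (g d) * p j g) = real (q d)"
    and one: "\<forall>j<m. (\<Sum>g\<in>P j. p j g) = 1"
    and nn: "\<forall>j<m. \<forall>g\<in>P j. p j g \<ge> 0"
    using pf unfolding cs_feasible_def P_def by auto
  have fin: "finite (P j)" if "j < m" for j
    using one that by (metis sum.infinite zero_neq_one)
  have Kge: "C j \<le> K" if "j < m" for j
    unfolding K_def Cmax_def using that by (intro Max_ge) auto
  have szle: "sz g \<le> C j" if "g \<in> P j" for g j
    using that unfolding P_def patterns_def sz_def by auto
  have finI: "finite I"
  proof -
    have "I \<subseteq> {..K} \<times> {..K}" unfolding I_def arcs_def by auto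
    thus ?thesis by (rule finite_subset) auto
  qed
  have sub: "set (Ag n' w g) \<subseteq> I" if "j < m" "g \<in> P j" for j g
    unfolding I_def using szle[OF that(2)] Kge[OF that(1)]
    by (intro Ag_arcs) (simp add: sz_def)
  define x where "x = (\<lambda>e. \<Sum>j<m. \<Sum>g\<in>P j. p j g * real (length (filter ((=) e) (Ag n' w g))))"
  define y where "y = (\<lambda>a j. \<Sum>g\<in>P j. if sz g = a then p j g else 0)"
  have xsum: "(\<Sum>e\<in>{e\<in>I. Q e}. x e) = (\<Sum>j<m. \<Sum>g\<in>P j. p j g * real (length (filter Q (Ag n' w g))))"
    for Q
  proof -
    have "(\<Sum>e\<in>{e\<in>I. Q e}. x e)
        = (\<Sum>j<m. \<Sum>e\<in>{e\<in>I. Q e}. \<Sum>g\<in>P j. p j g * real (length (filter ((=) e) (Ag n' w g))))"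
      unfolding x_def by (rule sum.swap)
    also have "\<dots> = (\<Sum>j<m. \<Sum>g\<in>P j. \<Sum>e\<in>{e\<in>I. Q e}. p j g * real (length (filter ((=) e) (Ag n' w g))))"
      by (rule sum.cong[OF refl], rule sum.swap)
    also have "\<dots> = (\<Sum>j<m. \<Sum>g\<in>P j. p j g * (\<Sum>e\<in>{e\<in>I. Q e}. real (length (filter ((=) e) (Ag n' w g)))))"
      by (simp add: sum_distrib_left)
    also have "\<dots> = (\<Sum>j<m. \<Sum>g\<in>P j. p j g * real (length (filter Q (Ag n' w g))))"
      using sum_cnt[OF finI sub] by (intro sum.cong refl) auto
    finally show ?thesis .
  qed
  have ysum: "(\<Sum>j<m. y a j) = (\<Sum>j<m. \<Sum>g\<in>P j. p j g * (if sz g = a then 1 else 0))" for a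
    unfolding y_def by (intro sum.cong refl) auto
  have h1: "\<forall>e\<in>I. x e \<ge> 0"
    unfolding x_def using nn by (auto intro!: sum_nonneg mult_nonneg_nonneg)
  have h2: "\<forall>j<m. \<forall>a\<le>K. 0 \<le> y a j \<and> y a j \<le> 1"
  proof (intro allI impI conjI)
    fix j a assume j: "j < m"
    show "0 \<le> y a j" unfolding y_def using nn j by (auto intro!: sum_nonneg)
    have "y a j \<le> (\<Sum>g\<in>P j. p j g)" unfolding y_def using nn j by (intro sum_mono) auto
    thus "y a j \<le> 1" using one j by simp
  qed
  have h3: "\<forall>bb\<in>{1..K}. (\<Sum>e\<in>{e\<in>I. snd e = bb}. x e) - (\<Sum>e\<in>{e\<in>I. fst e = bb}. x e)
                        - (\<Sum>j<m. y bb j) = 0"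
  proof
    fix bb assume "bb \<in> {1..K}"
    hence bb: "bb \<noteq> 0" by auto
    have "(\<Sum>e\<in>{e\<in>I. snd e = bb}. x e) - (\<Sum>e\<in>{e\<in>I. fst e = bb}. x e) - (\<Sum>j<m. y bb j)
       = (\<Sum>j<m. \<Sum>g\<in>P j. p j g * (real (length (filter (\<lambda>e. snd e = bb) (Ag n' w g)))
            - real (length (filter (\<lambda>e. fst e = bb) (Ag n' w g))) - (if sz g = bb then 1 else 0)))"
      unfolding xsum ysum by (simp add: sum_subtractf right_diff_distrib)
    also have "\<dots> = 0"
      using bb by (intro sum.neutral ballI) (simp add: flow_pat sz_def)
    finally show "(\<Sum>e\<in>{e\<in>I. snd e = bb}. x e) - (\<Sum>e\<in>{e\<in>I. fst e = bb}. x e) - (\<Sum>j<m. y bb j) = 0" .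
  qed
  have h4: "- (\<Sum>e\<in>{e\<in>I. fst e = 0}. x e) - (\<Sum>j<m. y 0 j) = - real m"
  proof -
    have "- (\<Sum>e\<in>{e\<in>I. fst e = 0}. x e) - (\<Sum>j<m. y 0 j)
       = (\<Sum>j<m. \<Sum>g\<in>P j. p j g * (- real (length (filter (\<lambda>e. fst e = 0) (Ag n' w g)))
             - (if sz g = 0 then 1 else 0)))"
      unfolding xsum ysum by (simp add: sum_subtractf right_diff_distrib sum_negf)
    also have "\<dots> = (\<Sum>j<m. \<Sum>g\<in>P j. - p j g)"
    proof (intro sum.cong refl)
      fix j g
      have "real (length (filter (\<lambda>e. snd e = 0) (Ag n' w g))) = 0"
        using Ag_in0[OF assms(2)] by simp
      thus "p j g * (- real (length (filter (\<lambda>e. fst e = 0) (Ag n' w g))) - (if sz g = 0 then 1 else 0)) = - p j g"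
        using flow_pat[of 0 n' w g] by (simp add: sz_def split: if_splits)
    qed
    also have "\<dots> = - real m" using one by (simp add: sum_negf)
    finally show ?thesis .
  qed
  have h5: "\<forall>j<m. (\<Sum>a\<in>{0..C j}. y a j) = 1"
  proof (intro allI impI)
    fix j assume j: "j < m"
    have "(\<Sum>a\<in>{0..C j}. y a j) = (\<Sum>g\<in>P j. \<Sum>a\<in>{0..C j}. if sz g = a then p j g else 0)"
      unfolding y_def by (rule sum.swap)
    also have "\<dots> = (\<Sum>g\<in>P j. p j g)"
      using szle by (intro sum.cong refl) (simp add: sum.delta)
    finally show "(\<Sum>a\<in>{0..C j}. y a j) = 1" using one j by simp
  qed
  have h6: "\<forall>d<n'. (\<Sum>e\<in>{e\<in>I. snd e = fst e + w d}. x e) = real (q d)"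
  proof (intro allI impI)
    fix d assume d: "d < n'"
    have "(\<Sum>e\<in>{e\<in>I. snd e = fst e + w d}. x e) = (\<Sum>j<m. \<Sum>g\<in>P j. real (g d) * p j g)"
      unfolding xsum using Ag_item[OF assms(1) d] by (intro sum.cong refl) simp
    thus "(\<Sum>e\<in>{e\<in>I. snd e = fst e + w d}. x e) = real (q d)" using item d by simp
  qed
  have h7: "\<forall>j<m. \<forall>a\<in>{C j + 1..K}. y a j = 0"
    unfolding y_def using szle by (force intro!: sum.neutral)
  have feas: "af_feasible n' w q m C x y"
    unfolding af_feasible_def Let_def K_def[symmetric] I_def[symmetric]
    using h1 h2 h3 h4 h5 h6 h7 by blast
  have pc: "pattern_cost n' w (f j) (c j) g = af_cost (f j) (c j) (sz g)" if "g \<in> P j" for g j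
  proof (cases "g = (\<lambda>_. 0)")
    case True thus ?thesis by (simp add: pattern_cost_def af_cost_def sz_def)
  next
    case False
    then obtain d where gd: "g d \<noteq> 0" by auto
    have d: "d < n'" using gd that unfolding P_def patterns_def by (cases "d < n'") auto
    have "g d * w d \<le> sz g" unfolding sz_def using d by (intro member_le_sum) auto
    moreover have "g d * w d > 0" using gd d assms(2) by auto
    ultimately have "sz g \<noteq> 0" by linarith
    have "pattern_cost n' w (f j) (c j) g = f j + c j * real (sz g)"
      unfolding pattern_cost_def sz_def by (simp only: False if_False)
    moreover have "af_cost (f j) (c j) (sz g) = f j + real (sz g) * c j"
      using \<open>sz g \<noteq> 0\<close> by (simp add: af_cost_def)
    ultimately show ?thesis by (simp add: mult.commute)
  qed
  have "af_objective m C f c y = cs_objective n' w q m C f c p"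
    unfolding af_objective_def cs_objective_def K_def[symmetric] Peq
  proof (intro sum.cong refl)
    fix j assume j: "j \<in> {..<m}"
    have "(\<Sum>a\<in>{0..K}. af_cost (f j) (c j) a * y a j)
        = (\<Sum>a\<in>{0..K}. \<Sum>g\<in>P j. if sz g = a then af_cost (f j) (c j) a * p j g else 0)"
      unfolding y_def by (simp add: sum_distrib_left if_distrib cong: if_cong)
    also have "\<dots> = (\<Sum>g\<in>P j. \<Sum>a\<in>{0..K}. if sz g = a then af_cost (f j) (c j) a * p j g else 0)"
      by (rule sum.swap)
    also have "\<dots> = (\<Sum>g\<in>P j. af_cost (f j) (c j) (sz g) * p j g)"
    proof (intro sum.cong refl)
      fix g assume "g \<in> P j"
      hence "sz g \<le> K" using szle Kge j by (meson le_trans lessThan_iff)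
      thus "(\<Sum>a\<in>{0..K}. if sz g = a then af_cost (f j) (c j) a * p j g else 0) = af_cost (f j) (c j) (sz g) * p j g"
        by (simp add: sum.delta)
    qed
    also have "\<dots> = (\<Sum>g\<in>P j. pattern_cost n' w (f j) (c j) g * p j g)"
      using pc by simp
    finally show "(\<Sum>a\<in>{0..K}. af_cost (f j) (c j) a * y a j) = (\<Sum>g\<in>P j. pattern_cost n' w (f j) (c j) g * p j g)" .
  qed
  thus "\<exists>a\<in>(\<lambda>(x, y). af_objective m C f c y) ` {(x, y). af_feasible n' w q m C x y}. a \<le> b"
    using feas b by force
qed

end
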